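(* Let $\Omega\subseteq\mathbb{R}^d$ be compact, $m\ge0$, and let $h_0,C_1,C_2>0$ be constants of local polynomial reproduction as described in the context. Fix $\nu>0$, $\gamma\in(0,1)$, $c_\gamma>1$, $c_{qu}>0$. Let $X=\{x_1,\dots,x_N\}\subseteq\Omega$ be $\pi_m(\mathbb{R}^d)$-unisolvent and quasi-uniform with respect to $c_{qu}$, with $h_{X,\Omega}\le h_0$, and let $\gamma c_\gamma h_{X,\Omega}\le\delta\le c_\gamma h_{X,\Omega}$. For $x\in\Omega$ let $(a_1^*(x),\dots,a_N^*(x))$ be any minimizer of the linear program $$\min\ \sum_{i=1}^N\frac{|a_i|}{e^{-\nu(\|x-x_i\|_2/\delta)^2}}\quad\text{subject to}\quad\sum_{i=1}^N p(x_i)a_i=p(x)\ \text{ for all }p\in\pi_m(\mathbb{R}^d).$$ Then $\sum_i p(x_i)a_i^*(x)=p(x)$ for all $p\in\pi_m(\mathbb{R}^d)$, and for all $x\in\Omega$, $i=1,\dots,N$, $$|a_i^*(x)|\le C\,\varphi\!\left(\frac{\|x-x_i\|_2}{q_X}\right),\qquad C=e\,C_1\exp\!\Big(\nu\Big(\frac{C_2}{\gamma c_\gamma}\Big)^2\Big),\quad \varphi(t)=\exp\!\Big(-\sqrt{\nu}\,\frac{t}{c_\gamma c_{qu}}\Big).$$ Hence these functions provide fast-decaying polynomial reproduction of degree $m$ with respect to $\varphi$.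
   Context: Constants $h_0,C_1,C_2>0$: for every finite $X=\{x_1,\dots,x_N\}\subseteq\Omega$ with $h_{X,\Omega}\le h_0$ and every $x\in\Omega$ there are reals $\tilde u_j(x)$ with $\sum_j p(x_j)\tilde u_j(x)=p(x)$ for all $p\in\pi_m(\mathbb{R}^d)$, $\sum_j|\tilde u_j(x)|\le C_1$, $\tilde u_j(x)=0$ if $\|x-x_j\|_2>C_2h_{X,\Omega}$. $q_X=\frac12\min_{i\ne j}\|x_i-x_j\|_2$, $h_{X,\Omega}=\sup_{x\in\Omega}\min_j\|x-x_j\|_2$; quasi-uniform w.r.t. $c_{qu}$ means $q_X\le h_{X,\Omega}\le c_{qu}q_X$. $\pi_m(\mathbb{R}^d)$: polynomials of total degree $\le m$; unisolvent: only the zero polynomial of $\pi_m$ vanishes on $X$. Fast-decaying polynomial reproduction of degree $m$ w.r.t. a decreasing $\varphi>0$ with $\lim\varphi(n+1)/\varphi(n)<1$: $\sum_j p(x_j)a_j^*=p$ for all $p\in\pi_m(\mathbb{R}^d)$ and $|a_j^*(x)|\le C\varphi(\|x-x_j\|_2/q_X)$ for all $x,j$. *)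

theory Defs
  imports "HOL-Analysis.Analysis"
begin

definition monomial :: "('d::finite \<Rightarrow> nat) \<Rightarrow> real^'d \<Rightarrow> real" where
  "monomial \<alpha> x = (\<Prod>i\<in>UNIV. (x $ i) ^ (\<alpha> i))"

definition poly_space :: "nat \<Rightarrow> (real^'d::finite \<Rightarrow> real) set" where
  "poly_space m = {p. \<exists>c :: ('d \<Rightarrow> nat) \<Rightarrow> real.
      p = (\<lambda>x. \<Sum>\<alpha>\<in>{\<alpha>. sum \<alpha> UNIV \<le> m}. c \<alpha> * monomial \<alpha> x)}"

definition unisolvent :: "nat \<Rightarrow> (real^'d::finite) set \<Rightarrow> bool" where
  "unisolvent m X \<longleftrightarrow> (\<forall>p\<in>poly_space m. (\<forall>y\<in>X. p y = 0) \<longrightarrow> p = (\<lambda>_. 0))"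

definition fill_dist :: "(real^'d::finite) set \<Rightarrow> (real^'d) set \<Rightarrow> real" where
  "fill_dist X \<Omega> = (SUP x\<in>\<Omega>. infdist x X)"

definition sep_dist :: "(real^'d::finite) set \<Rightarrow> real" where
  "sep_dist X = Inf {dist a b / 2 | a b. a \<in> X \<and> b \<in> X \<and> a \<noteq> b}"

definition quasi_uniform :: "real \<Rightarrow> (real^'d::finite) set \<Rightarrow> (real^'d) set \<Rightarrow> bool" where
  "quasi_uniform cqu X \<Omega> \<longleftrightarrow> sep_dist X \<le> fill_dist X \<Omega> \<and> fill_dist X \<Omega> \<le> cqu * sep_dist X"

definition local_poly_repr ::
  "(real^'d::finite) set \<Rightarrow> nat \<Rightarrow> real \<Rightarrow> real \<Rightarrow> real \<Rightarrow> bool" where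
  "local_poly_repr \<Omega> m h0 C1 C2 \<longleftrightarrow>
    (\<forall>(N::nat) (y::nat \<Rightarrow> real^'d). N \<ge> 1 \<and> inj_on y {..<N} \<and> y ` {..<N} \<subseteq> \<Omega>
       \<and> fill_dist (y ` {..<N}) \<Omega> \<le> h0 \<longrightarrow>
      (\<forall>x\<in>\<Omega>. \<exists>u::nat \<Rightarrow> real.
         (\<forall>p\<in>poly_space m. (\<Sum>j<N. p (y j) * u j) = p x)
       \<and> (\<Sum>j<N. \<bar>u j\<bar>) \<le> C1
       \<and> (\<forall>j<N. norm (x - y j) > C2 * fill_dist (y ` {..<N}) \<Omega> \<longrightarrow> u j = 0)))"

definition lp_feasible :: "nat \<Rightarrow> nat \<Rightarrow> (nat \<Rightarrow> real^'d::finite) \<Rightarrow> real^'d \<Rightarrow> (nat \<Rightarrow> real) \<Rightarrow> bool" where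
  "lp_feasible m N xs x a \<longleftrightarrow> (\<forall>p\<in>poly_space m. (\<Sum>i<N. p (xs i) * a i) = p x)"

definition lp_objective :: "real \<Rightarrow> real \<Rightarrow> nat \<Rightarrow> (nat \<Rightarrow> real^'d::finite) \<Rightarrow> real^'d \<Rightarrow> (nat \<Rightarrow> real) \<Rightarrow> real" where
  "lp_objective \<nu> \<delta> N xs x a = (\<Sum>i<N. \<bar>a i\<bar> / exp (- \<nu> * (norm (x - xs i) / \<delta>)^2))"

definition lp_minimizer :: "nat \<Rightarrow> real \<Rightarrow> real \<Rightarrow> nat \<Rightarrow> (nat \<Rightarrow> real^'d::finite) \<Rightarrow> real^'d \<Rightarrow> (nat \<Rightarrow> real) \<Rightarrow> bool" where
  "lp_minimizer m \<nu> \<delta> N xs x a \<longleftrightarrow> lp_feasible m N xs x a \<and>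
     (\<forall>b. lp_feasible m N xs x b \<longrightarrow> lp_objective \<nu> \<delta> N xs x a \<le> lp_objective \<nu> \<delta> N xs x b)"

definition fast_decaying_repr ::
  "nat \<Rightarrow> (real^'d::finite) set \<Rightarrow> nat \<Rightarrow> (nat \<Rightarrow> real^'d) \<Rightarrow> (real \<Rightarrow> real) \<Rightarrow> (real^'d \<Rightarrow> nat \<Rightarrow> real) \<Rightarrow> bool" where
  "fast_decaying_repr m \<Omega> N xs \<phi> a \<longleftrightarrow>
     (\<forall>t\<ge>0. \<phi> t > 0) \<and> (\<forall>s t. 0 \<le> s \<longrightarrow> s \<le> t \<longrightarrow> \<phi> t \<le> \<phi> s)
   \<and> (\<exists>L<1. (\<lambda>n::nat. \<phi> (real n + 1) / \<phi> (real n)) \<longlonglongrightarrow> L)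
   \<and> (\<forall>x\<in>\<Omega>. \<forall>p\<in>poly_space m. (\<Sum>j<N. p (xs j) * a x j) = p x)
   \<and> (\<exists>C. \<forall>x\<in>\<Omega>. \<forall>j<N. \<bar>a x j\<bar> \<le> C * \<phi> (norm (x - xs j) / sep_dist (xs ` {..<N})))"

end

theory Submission
  imports Defs
begin

lemma obj_eq: "lp_objective \<nu> \<delta> N xs x a = (\<Sum>i<N. \<bar>a i\<bar> * exp (\<nu> * (norm (x - xs i) / \<delta>)^2))"
  unfolding lp_objective_def by (simp add: exp_minus divide_inverse)

lemma key_ineq:
  fixes \<nu> s t :: real
  assumes "\<nu> > 0" "0 \<le> s" "s \<le> t"
  shows "exp (- (\<nu> * t^2)) \<le> exp 1 * exp (- sqrt \<nu> * s)"
proof -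
  have "\<nu> * s^2 \<le> \<nu> * t^2" using assms by (intro mult_left_mono power_mono) auto
  moreover have "sqrt \<nu> * s - 1 \<le> \<nu> * s^2"
  proof -
    have "0 \<le> (sqrt \<nu> * s - 1/2)^2" by simp
    hence "0 \<le> (sqrt \<nu>)^2 * s^2 - sqrt \<nu> * s + 1/4" by (simp add: power2_eq_square algebra_simps)
    thus ?thesis using assms by simp
  qed
  ultimately have "- (\<nu> * t^2) \<le> 1 + (- sqrt \<nu> * s)" by linarith
  hence "exp (- (\<nu> * t^2)) \<le> exp (1 + (- sqrt \<nu> * s))" by (simp only: exp_le_cancel_iff)
  thus ?thesis unfolding exp_add .
qed

theorem theorem5p1:
  fixes \<Omega> :: "(real^'d::finite) set" and m N :: nat and xs :: "nat \<Rightarrow> real^'d"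
    and h0 C1 C2 \<nu> \<gamma> c\<gamma> cqu \<delta> :: real
    and astar :: "real^'d \<Rightarrow> nat \<Rightarrow> real"
  assumes "compact \<Omega>"
    and "h0 > 0" and "C1 > 0" and "C2 > 0"
    and "local_poly_repr \<Omega> m h0 C1 C2"
    and "\<nu> > 0" and "0 < \<gamma>" and "\<gamma> < 1" and "c\<gamma> > 1" and "cqu > 0"
    and "N \<ge> 2" and "inj_on xs {..<N}" and "xs ` {..<N} \<subseteq> \<Omega>"
    and "unisolvent m (xs ` {..<N})"
    and "quasi_uniform cqu (xs ` {..<N}) \<Omega>"
    and "fill_dist (xs ` {..<N}) \<Omega> \<le> h0"
    and "\<gamma> * c\<gamma> * fill_dist (xs ` {..<N}) \<Omega> \<le> \<delta>"
    and "\<delta> \<le> c\<gamma> * fill_dist (xs ` {..<N}) \<Omega>"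
    and "\<forall>x\<in>\<Omega>. lp_minimizer m \<nu> \<delta> N xs x (astar x)"
  shows "(\<forall>x\<in>\<Omega>. \<forall>p\<in>poly_space m. (\<Sum>i<N. p (xs i) * astar x i) = p x)
    \<and> (\<forall>x\<in>\<Omega>. \<forall>i<N. \<bar>astar x i\<bar> \<le>
          (exp 1 * C1 * exp (\<nu> * (C2 / (\<gamma> * c\<gamma>))^2))
          * exp (- sqrt \<nu> * ((norm (x - xs i) / sep_dist (xs ` {..<N}))) / (c\<gamma> * cqu)))
    \<and> fast_decaying_repr m \<Omega> N xs (\<lambda>t. exp (- sqrt \<nu> * t / (c\<gamma> * cqu))) astar"
proof -
  define X where "X = xs ` {..<N}"
  define h where "h = fill_dist X \<Omega>"
  define q where "q = sep_dist X"
  have q0: "q \<ge> 0"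
  proof -
    have ne: "xs 0 \<noteq> xs 1" using inj_onD[OF assms(12), of 0 1] assms(11) by auto
    have "dist (xs 0) (xs 1) / 2 \<in> {dist a b / 2 | a b. a \<in> X \<and> b \<in> X \<and> a \<noteq> b}"
    proof -
      have "xs 0 \<in> X" "xs 1 \<in> X" using assms(11) unfolding X_def by auto
      thus ?thesis using ne by blast
    qed
    hence "{dist a b / 2 | a b. a \<in> X \<and> b \<in> X \<and> a \<noteq> b} \<noteq> {}" by blast
    moreover have "\<And>z. z \<in> {dist a b / 2 | a b. a \<in> X \<and> b \<in> X \<and> a \<noteq> b} \<Longrightarrow> (0::real) \<le> z"
    proof -
      fix z assume "z \<in> {dist a b / 2 | a b. a \<in> X \<and> b \<in> X \<and> a \<noteq> b}"
      then obtain a b :: "real^'d" where "z = dist a b / 2" by blast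
      thus "0 \<le> z" using zero_le_dist[of a b] by linarith
    qed
    ultimately show ?thesis unfolding q_def sep_dist_def by (rule cInf_greatest)
  qed
  have qh: "q \<le> h" "h \<le> cqu * q" using assms(15) unfolding quasi_uniform_def h_def q_def X_def by auto
  have h0': "h \<ge> 0" using q0 qh by linarith
  have d17: "\<gamma> * c\<gamma> * h \<le> \<delta>" and d18: "\<delta> \<le> c\<gamma> * h"
    using assms(17,18) unfolding h_def X_def by auto
  have gc: "\<gamma> * c\<gamma> > 0" using assms(7,9) by simp
  have d0: "\<delta> \<ge> 0" using d17 mult_nonneg_nonneg[of "\<gamma> * c\<gamma>" h] gc h0' by linarith
  have hpos: "h > 0" if "\<delta> > 0"
  proof (rule ccontr)
    assume "\<not> h > 0"
    hence "c\<gamma> * h \<le> 0" using assms(9) by (simp add: mult_nonneg_nonpos)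
    thus False using d18 that by linarith
  qed
  define W where "W = exp (\<nu> * (C2 / (\<gamma> * c\<gamma>))^2)"
  have feas: "\<forall>x\<in>\<Omega>. \<forall>p\<in>poly_space m. (\<Sum>i<N. p (xs i) * astar x i) = p x"
    using assms(19) unfolding lp_minimizer_def lp_feasible_def by blast
  have bound: "\<bar>astar x i\<bar> \<le> (exp 1 * C1 * W) * exp (- sqrt \<nu> * (norm (x - xs i) / q) / (c\<gamma> * cqu))"
    if x: "x \<in> \<Omega>" and i: "i < N" for x i
  proof -
    obtain u where u1: "\<forall>p\<in>poly_space m. (\<Sum>j<N. p (xs j) * u j) = p x"
      and u2: "(\<Sum>j<N. \<bar>u j\<bar>) \<le> C1"
      and u3: "\<forall>j<N. norm (x - xs j) > C2 * h \<longrightarrow> u j = 0"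
    proof -
      have "N \<ge> 1" using assms(11) by simp
      hence "\<forall>x\<in>\<Omega>. \<exists>u::nat \<Rightarrow> real.
         (\<forall>p\<in>poly_space m. (\<Sum>j<N. p (xs j) * u j) = p x)
       \<and> (\<Sum>j<N. \<bar>u j\<bar>) \<le> C1
       \<and> (\<forall>j<N. norm (x - xs j) > C2 * fill_dist (xs ` {..<N}) \<Omega> \<longrightarrow> u j = 0)"
        using assms(5,12,13,16) unfolding local_poly_repr_def by blast
      with x that show thesis unfolding h_def X_def by blast
    qed
    have "lp_feasible m N xs x u" using u1 unfolding lp_feasible_def by blast
    hence opt: "lp_objective \<nu> \<delta> N xs x (astar x) \<le> lp_objective \<nu> \<delta> N xs x u"
      using assms(19) x unfolding lp_minimizer_def by blast
    have term_le: "\<bar>u j\<bar> * exp (\<nu> * (norm (x - xs j) / \<delta>)^2) \<le> \<bar>u j\<bar> * W" if "j < N" for j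
    proof (cases "u j = 0")
      case False
      hence r: "norm (x - xs j) \<le> C2 * h" using u3 that by force
      have "norm (x - xs j) / \<delta> \<le> C2 / (\<gamma> * c\<gamma>)"
      proof (cases "\<delta> > 0")
        case True
        hence hp: "h > 0" by (rule hpos)
        have "norm (x - xs j) / \<delta> \<le> C2 * h / \<delta>" using r True by (simp add: divide_right_mono)
        also have "\<dots> \<le> C2 * h / (\<gamma> * c\<gamma> * h)"
          using assms(4) hp True d17 gc h0'
          by (intro divide_left_mono) auto
        also have "\<dots> = C2 / (\<gamma> * c\<gamma>)" using hp by simp
        finally show ?thesis .
      next
        case False
        hence "\<delta> = 0" using d0 by simp
        thus ?thesis using assms(4,7,9) by simp
      qed
      moreover have "0 \<le> norm (x - xs j) / \<delta>" using d0 by simp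
      ultimately have "(norm (x - xs j) / \<delta>)^2 \<le> (C2 / (\<gamma> * c\<gamma>))^2" by (rule power_mono)
      hence "exp (\<nu> * (norm (x - xs j) / \<delta>)^2) \<le> W" unfolding W_def using assms(6) by simp
      thus ?thesis by (simp add: mult_left_mono)
    qed simp
    have "\<bar>astar x i\<bar> * exp (\<nu> * (norm (x - xs i) / \<delta>)^2) \<le> lp_objective \<nu> \<delta> N xs x (astar x)"
      unfolding obj_eq using i by (intro member_le_sum) auto
    also have "\<dots> \<le> lp_objective \<nu> \<delta> N xs x u" by (rule opt)
    also have "\<dots> \<le> (\<Sum>j<N. \<bar>u j\<bar> * W)" unfolding obj_eq by (intro sum_mono term_le) auto
    also have "\<dots> = (\<Sum>j<N. \<bar>u j\<bar>) * W" by (simp add: sum_distrib_right)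
    also have "\<dots> \<le> C1 * W" using u2 W_def by (simp add: mult_right_mono)
    finally have A: "\<bar>astar x i\<bar> * exp (\<nu> * (norm (x - xs i) / \<delta>)^2) \<le> C1 * W" .
    hence B: "\<bar>astar x i\<bar> \<le> C1 * W * exp (- (\<nu> * (norm (x - xs i) / \<delta>)^2))"
      by (simp add: exp_minus field_simps)
    define s where "s = (norm (x - xs i) / q) / (c\<gamma> * cqu)"
    have s0: "0 \<le> s" unfolding s_def using q0 assms(9,10) by simp
    have st: "s \<le> norm (x - xs i) / \<delta>"
    proof (cases "q > 0")
      case True
      hence hp: "h > 0" using qh by linarith
      hence dp: "\<delta> > 0" using d17 gc mult_pos_pos[of "\<gamma> * c\<gamma>" h] by linarith
      have "c\<gamma> * h \<le> c\<gamma> * (cqu * q)" using assms(9) qh by (intro mult_left_mono) auto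
      hence "\<delta> \<le> c\<gamma> * cqu * q" using d18 by (simp add: mult.assoc)
      hence "norm (x - xs i) / (c\<gamma> * cqu * q) \<le> norm (x - xs i) / \<delta>"
        using dp by (intro divide_left_mono) auto
      thus ?thesis unfolding s_def by (simp add: field_simps)
    next
      case False
      hence "q = 0" using q0 by simp
      thus ?thesis unfolding s_def using d0 by simp
    qed
    have "exp (- (\<nu> * (norm (x - xs i) / \<delta>)^2)) \<le> exp 1 * exp (- sqrt \<nu> * s)"
      by (rule key_ineq[OF assms(6) s0 st])
    hence "C1 * W * exp (- (\<nu> * (norm (x - xs i) / \<delta>)^2)) \<le> C1 * W * (exp 1 * exp (- sqrt \<nu> * s))"
      using assms(3) W_def by (intro mult_left_mono) auto
    with B show ?thesis unfolding s_def by (simp add: mult_ac)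
  qed
  have fd: "fast_decaying_repr m \<Omega> N xs (\<lambda>t. exp (- sqrt \<nu> * t / (c\<gamma> * cqu))) astar"
    unfolding fast_decaying_repr_def
  proof (intro conjI)
    show "\<forall>t\<ge>0. exp (- sqrt \<nu> * t / (c\<gamma> * cqu)) > 0" by simp
    show "\<forall>s t. 0 \<le> s \<longrightarrow> s \<le> t \<longrightarrow> exp (- sqrt \<nu> * t / (c\<gamma> * cqu)) \<le> exp (- sqrt \<nu> * s / (c\<gamma> * cqu))"
      using assms(6,9,10) by (auto intro!: divide_right_mono mult_left_mono)
    define L where "L = exp (- sqrt \<nu> / (c\<gamma> * cqu))"
    have "\<And>n::nat. exp (- sqrt \<nu> * (real n + 1) / (c\<gamma> * cqu)) / exp (- sqrt \<nu> * real n / (c\<gamma> * cqu)) = L"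
    proof -
      fix n :: nat
      have "- sqrt \<nu> * (real n + 1) / (c\<gamma> * cqu) - - sqrt \<nu> * real n / (c\<gamma> * cqu) = - sqrt \<nu> / (c\<gamma> * cqu)"
        using assms(9,10) by (simp add: field_simps)
      thus "exp (- sqrt \<nu> * (real n + 1) / (c\<gamma> * cqu)) / exp (- sqrt \<nu> * real n / (c\<gamma> * cqu)) = L"
        unfolding L_def by (simp only: exp_diff[symmetric])
    qed
    moreover have "L < 1" unfolding L_def using assms(6,9,10) by simp
    ultimately show "\<exists>L<1. (\<lambda>n::nat. exp (- sqrt \<nu> * (real n + 1) / (c\<gamma> * cqu)) / exp (- sqrt \<nu> * real n / (c\<gamma> * cqu))) \<longlonglongrightarrow> L"
      by auto
    show "\<forall>x\<in>\<Omega>. \<forall>p\<in>poly_space m. (\<Sum>j<N. p (xs j) * astar x j) = p x" using feas by blast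
    show "\<exists>C. \<forall>x\<in>\<Omega>. \<forall>j<N. \<bar>astar x j\<bar> \<le> C * exp (- sqrt \<nu> * (norm (x - xs j) / sep_dist (xs ` {..<N})) / (c\<gamma> * cqu))"
      using bound unfolding q_def X_def by blast
  qed
  show ?thesis using feas bound fd unfolding W_def q_def X_def by blast
qed

end
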